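(* Let $n\ge2$, let $c=(c_{i,j})$ be an $n\times(n+1)$ matrix with entries in $\{0,1\}$, $\sigma_1,\ldots,\sigma_n>0$, $\gamma_1,\ldots,\gamma_{n+1}>0$. Let $\mathbf{X}=(X_1,\ldots,X_n)'$ have decumulative distribution function \[ \mathbf{P}[X_1>x_1,\ldots,X_n>x_n]=\prod_{j=1}^{n+1}\left(1+\sum_{i=1}^n\frac{c_{i,j}}{\sigma_i}x_i\right)^{-\gamma_j},\quad (x_1,\ldots,x_n)'\in(0,\infty)^n. \] For $1\le k\ne l\le n$ define $\gamma_{c,(k,l)}=\gamma_{c,(l,k)}=\sum_jc_{k,j}c_{l,j}\gamma_j$ (assumed $>0$), $\gamma_{c,k}=\sum_jc_{k,j}(1-c_{l,j})\gamma_j$, $\gamma_{c,l}=\sum_jc_{l,j}(1-c_{k,j})\gamma_j$, $\gamma^\ast_{c,l}=\gamma_{c,l}+\gamma_{c,(k,l)}$, and $m(x)=\frac{\sigma_k}{\gamma_{c,(k,l)}}\left(1+\frac{x}{\sigma_l}\right)$. Then for $x_k,x_l>0$, \[ \mathbf{P}[X_k>x_k\mid X_l=x_l]=\left(\frac{\gamma_{c,(k,l)}}{\gamma^\ast_{c,l}}+\frac{\gamma_{c,l}}{\gamma^\ast_{c,l}}\left(1+\frac{x_k}{\gamma_{c,(k,l)}m(x_l)}\right)\right)\left(1+\frac{x_k}{\sigma_k}\right)^{-\gamma_{c,k}}\left(1+\frac{x_k}{\gamma_{c,(k,l)}m(x_l)}\right)^{-\gamma_{c,(l,k)}-1}. \]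 *)

theory Defs
  imports "HOL-Probability.Probability"
begin

text \<open>Parameters of the multivariate Pareto-type distribution.
  Indices: i ranges over {1..n}, j over {1..n+1}.\<close>

definition gamma_pair :: "nat \<Rightarrow> (nat \<Rightarrow> nat \<Rightarrow> real) \<Rightarrow> (nat \<Rightarrow> real) \<Rightarrow> nat \<Rightarrow> nat \<Rightarrow> real" where
  "gamma_pair n c \<gamma> k l = (\<Sum>j=1..n+1. c k j * c l j * \<gamma> j)"

text \<open>gamma_single n c gamma k l is gamma_{c,k} in the context of the pair (k,l).\<close>
definition gamma_single :: "nat \<Rightarrow> (nat \<Rightarrow> nat \<Rightarrow> real) \<Rightarrow> (nat \<Rightarrow> real) \<Rightarrow> nat \<Rightarrow> nat \<Rightarrow> real" where
  "gamma_single n c \<gamma> k l = (\<Sum>j=1..n+1. c k j * (1 - c l j) * \<gamma> j)"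

end

theory Submission
  imports Defs
begin

locale pareto = prob_space M for M :: "'a measure" +
  fixes X :: "'a \<Rightarrow> nat \<Rightarrow> real"
    and n :: nat and c :: "nat \<Rightarrow> nat \<Rightarrow> real"
    and \<sigma> :: "nat \<Rightarrow> real" and \<gamma> :: "nat \<Rightarrow> real" and k l :: nat
  assumes n2: "n \<ge> 2"
    and c01: "\<And>i j. i \<in> {1..n} \<Longrightarrow> j \<in> {1..n+1} \<Longrightarrow> c i j \<in> {0, 1}"
    and spos: "\<And>i. i \<in> {1..n} \<Longrightarrow> \<sigma> i > 0"
    and gpos: "\<And>j. j \<in> {1..n+1} \<Longrightarrow> \<gamma> j > 0"
    and Xm: "\<And>i. i \<in> {1..n} \<Longrightarrow> (\<lambda>\<omega>. X \<omega> i) \<in> borel_measurable M"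
    and surv: "\<And>x. (\<forall>i\<in>{1..n}. x i > 0) \<Longrightarrow>
           measure M {\<omega> \<in> space M. \<forall>i\<in>{1..n}. X \<omega> i > x i}
           = (\<Prod>j=1..n+1. (1 + (\<Sum>i=1..n. c i j / \<sigma> i * x i)) powr (- \<gamma> j))"
    and kin: "k \<in> {1..n}" and lin: "l \<in> {1..n}" and kl: "k \<noteq> l"
    and gklpos: "gamma_pair n c \<gamma> k l > 0"
begin

definition S :: "(nat \<Rightarrow> real) \<Rightarrow> 'a set" where
  "S t = {\<omega> \<in> space M. \<forall>i\<in>{1..n}. X \<omega> i > t i}"

lemma S_sets: "S t \<in> sets M"
proof -
  have "S t = space M \<inter> (\<Inter>i\<in>{1..n}. {\<omega> \<in> space M. t i < X \<omega> i})"
    unfolding S_def using n2 by auto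
  also have "\<dots> \<in> sets M"
  proof (intro sets.Int sets.finite_INT)
    fix i assume "i \<in> {1..n}"
    then show "{\<omega> \<in> space M. t i < X \<omega> i} \<in> sets M" using Xm[of i] by measurable
  qed (use n2 in auto)
  finally show ?thesis .
qed

definition P :: "(nat \<Rightarrow> real) \<Rightarrow> real" where
  "P t = (\<Prod>j=1..n+1. (1 + (\<Sum>i=1..n. c i j / \<sigma> i * t i)) powr (- \<gamma> j))"

lemma c_nonneg: "i \<in> {1..n} \<Longrightarrow> j \<in> {1..n+1} \<Longrightarrow> c i j \<ge> 0"
  using c01[of i j] by auto

lemma base_ge1: assumes "\<forall>i\<in>{1..n}. t i \<ge> 0" "j \<in> {1..n+1}"
  shows "1 + (\<Sum>i=1..n. c i j / \<sigma> i * t i) \<ge> 1"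
proof -
  have "(\<Sum>i=1..n. c i j / \<sigma> i * t i) \<ge> 0"
    using assms c_nonneg spos by (intro sum_nonneg) (auto intro!: mult_nonneg_nonneg divide_nonneg_pos)
  then show ?thesis by simp
qed

lemma surv0: assumes t: "\<forall>i\<in>{1..n}. t i \<ge> 0"
  shows "measure M (S t) = P t"
proof -
  define A where "A m = S (\<lambda>i. t i + 1 / real (Suc m))" for m
  have r: "range A \<subseteq> sets M" unfolding A_def using S_sets by auto
  have inc: "incseq A"
  proof (rule monoI)
    fix m m' :: nat assume "m \<le> m'"
    then have "1 / real (Suc m') \<le> 1 / real (Suc m)" by (simp add: frac_le)
    then show "A m \<subseteq> A m'" unfolding A_def S_def by force
  qed
  have U: "(\<Union>m. A m) = S t"
  proof
    have "A m \<subseteq> S t" for m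
    proof -
      have "(0::real) < 1 / real (Suc m)" by simp
      then show ?thesis unfolding A_def S_def
        by (auto intro: order.strict_trans[rotated])
    qed
    then show "(\<Union>m. A m) \<subseteq> S t" by blast
  next
    show "S t \<subseteq> (\<Union>m. A m)"
    proof
      fix \<omega> assume w: "\<omega> \<in> S t"
      define \<delta> where "\<delta> = Min ((\<lambda>i. X \<omega> i - t i) ` {1..n})"
      have "\<delta> > 0" unfolding \<delta>_def using w n2 by (subst Min_gr_iff) (auto simp: S_def)
      then obtain m where m: "inverse (real (Suc m)) < \<delta>" using reals_Archimedean by blast
      have "\<forall>i\<in>{1..n}. X \<omega> i > t i + 1 / real (Suc m)"
      proof
        fix i assume "i \<in> {1..n}"
        then have "\<delta> \<le> X \<omega> i - t i" unfolding \<delta>_def by (intro Min_le) auto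
        then show "X \<omega> i > t i + 1 / real (Suc m)" using m by (simp add: inverse_eq_divide)
      qed
      then show "\<omega> \<in> (\<Union>m. A m)" using w unfolding A_def S_def by auto
    qed
  qed
  have L1: "(\<lambda>m. measure M (A m)) \<longlonglongrightarrow> measure M (S t)"
    using finite_Lim_measure_incseq[OF r inc] U by simp
  have eq: "measure M (A m) = P (\<lambda>i. t i + 1 / real (Suc m))" for m
  proof -
    have "\<forall>i\<in>{1..n}. t i + 1 / real (Suc m) > 0" using t
      by (auto intro: add_nonneg_pos)
    then show ?thesis unfolding A_def P_def S_def by (rule surv)
  qed
  have z: "(\<lambda>m. 1 / real (Suc m)) \<longlonglongrightarrow> 0"
    using LIMSEQ_Suc[OF lim_1_over_n] by simp
  have L2: "(\<lambda>m. P (\<lambda>i. t i + 1 / real (Suc m))) \<longlonglongrightarrow> P t"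
    unfolding P_def
  proof (intro tendsto_prod tendsto_powr tendsto_const tendsto_add tendsto_sum tendsto_mult)
    fix i show "(\<lambda>m. t i + 1 / real (Suc m)) \<longlonglongrightarrow> t i" using tendsto_add[OF tendsto_const z] by simp
  next
    fix j assume "j \<in> {1..n+1}"
    then show "1 + (\<Sum>i=1..n. c i j / \<sigma> i * t i) \<noteq> 0" using base_ge1[OF t] by fastforce
  qed
  show ?thesis using LIMSEQ_unique[OF L1] L2 eq by simp
qed

definition T :: "real \<Rightarrow> real \<Rightarrow> nat \<Rightarrow> real" where
  "T a b = (\<lambda>i. if i = k then a else if i = l then b else 0)"

definition gkl where "gkl = gamma_pair n c \<gamma> k l"
definition gk where "gk = gamma_single n c \<gamma> k l"
definition gl where "gl = gamma_single n c \<gamma> l k"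

definition G :: "real \<Rightarrow> real \<Rightarrow> real" where
  "G a b = (1 + a / \<sigma> k) powr (- gk) * (1 + a / \<sigma> k + b / \<sigma> l) powr (- gkl)
           * (1 + b / \<sigma> l) powr (- gl)"

lemma sk: "\<sigma> k > 0" using spos kin by auto
lemma sl: "\<sigma> l > 0" using spos lin by auto

lemma sum_T: "(\<Sum>i=1..n. c i j / \<sigma> i * T a b i) = c k j * (a / \<sigma> k) + c l j * (b / \<sigma> l)"
proof -
  have "(\<Sum>i=1..n. c i j / \<sigma> i * T a b i)
      = (\<Sum>i=1..n. (if i = k then c k j * (a / \<sigma> k) else 0) + (if i = l then c l j * (b / \<sigma> l) else 0))"
    by (rule sum.cong) (use kl in \<open>auto simp: T_def\<close>)
  also have "\<dots> = c k j * (a / \<sigma> k) + c l j * (b / \<sigma> l)"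
    using kin lin by (simp add: sum.distrib)
  finally show ?thesis .
qed

lemma factor_split:
  assumes "a \<ge> 0" "b \<ge> 0" "j \<in> {1..n+1}"
  shows "(1 + (c k j * (a / \<sigma> k) + c l j * (b / \<sigma> l))) powr (- \<gamma> j)
    = (1 + a / \<sigma> k) powr (- (c k j * (1 - c l j) * \<gamma> j))
      * (1 + a / \<sigma> k + b / \<sigma> l) powr (- (c k j * c l j * \<gamma> j))
      * (1 + b / \<sigma> l) powr (- (c l j * (1 - c k j) * \<gamma> j))"
proof -
  have p1: "1 + a / \<sigma> k > 0" "1 + b / \<sigma> l > 0" "1 + a / \<sigma> k + b / \<sigma> l > 0"
    using assms sk sl by (auto intro!: add_pos_nonneg divide_nonneg_pos)
  have "c k j \<in> {0,1}" "c l j \<in> {0,1}" using c01 kin lin assms(3) by auto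
  then show ?thesis using p1 by (auto simp: add.assoc)
qed

lemma prod_powr_neg: "(x::real) \<noteq> 0 \<Longrightarrow> (\<Prod>j\<in>A. x powr (- f j)) = x powr (- sum f A)"
  by (simp add: powr_sum sum_negf[symmetric])

lemma P_T: assumes "a \<ge> 0" "b \<ge> 0" shows "P (T a b) = G a b"
proof -
  have p1: "1 + a / \<sigma> k > 0" "1 + b / \<sigma> l > 0" "1 + a / \<sigma> k + b / \<sigma> l > 0"
    using assms sk sl by (auto intro!: add_pos_nonneg divide_nonneg_pos)
  have "P (T a b) = (\<Prod>j=1..n+1. (1 + a / \<sigma> k) powr (- (c k j * (1 - c l j) * \<gamma> j))
      * (1 + a / \<sigma> k + b / \<sigma> l) powr (- (c k j * c l j * \<gamma> j))
      * (1 + b / \<sigma> l) powr (- (c l j * (1 - c k j) * \<gamma> j)))"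
    unfolding P_def sum_T using factor_split[OF assms] by (intro prod.cong) auto
  also have "\<dots> = (\<Prod>j=1..n+1. (1 + a / \<sigma> k) powr (- (c k j * (1 - c l j) * \<gamma> j)))
      * (\<Prod>j=1..n+1. (1 + a / \<sigma> k + b / \<sigma> l) powr (- (c k j * c l j * \<gamma> j)))
      * (\<Prod>j=1..n+1. (1 + b / \<sigma> l) powr (- (c l j * (1 - c k j) * \<gamma> j)))"
    by (simp add: prod.distrib)
  also have "\<dots> = G a b"
    unfolding G_def gk_def gkl_def gl_def gamma_single_def gamma_pair_def
    using p1 by (simp only: prod_powr_neg)
  finally show ?thesis .
qed

lemma AE_pos: "AE \<omega> in M. \<forall>i\<in>{1..n}. X \<omega> i > 0"
proof -
  have "prob (S (\<lambda>i. 0)) = 1" using surv0[of "\<lambda>i. 0"] by (simp add: P_def)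
  from AE_prob_1[OF this] show ?thesis by (auto simp: S_def)
qed

lemma AE_Xl: "AE \<omega> in M. X \<omega> l > 0" using AE_pos lin by auto

lemma Xk_m[measurable]: "(\<lambda>\<omega>. X \<omega> k) \<in> borel_measurable M" using Xm kin by auto
lemma Xl_m[measurable]: "(\<lambda>\<omega>. X \<omega> l) \<in> borel_measurable M" using Xm lin by auto

lemma meas_kl: assumes "a \<ge> 0"
  shows "prob {\<omega>\<in>space M. X \<omega> k > a \<and> X \<omega> l > b} = G a (max b 0)"
proof -
  have "prob {\<omega>\<in>space M. X \<omega> k > a \<and> X \<omega> l > b} = prob (S (T a (max b 0)))"
  proof (rule measure_eq_AE)
    show "AE x in M. (x \<in> {\<omega>\<in>space M. X \<omega> k > a \<and> X \<omega> l > b}) = (x \<in> S (T a (max b 0)))"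
      using AE_pos
    proof eventually_elim
      case (elim \<omega>)
      show ?case using elim kin lin kl assms unfolding S_def T_def by auto
    qed
  qed (auto simp: S_sets)
  also have "\<dots> = G a (max b 0)"
    using assms by (subst surv0) (auto simp: T_def P_T[unfolded T_def])
  finally show ?thesis .
qed

lemma meas_l: "prob {\<omega>\<in>space M. X \<omega> l > b} = G 0 (max b 0)"
proof -
  have "prob {\<omega>\<in>space M. X \<omega> l > b} = prob {\<omega>\<in>space M. X \<omega> k > 0 \<and> X \<omega> l > b}"
  proof (rule measure_eq_AE)
    show "AE x in M. (x \<in> {\<omega>\<in>space M. X \<omega> l > b}) = (x \<in> {\<omega>\<in>space M. X \<omega> k > 0 \<and> X \<omega> l > b})"
      using AE_pos by eventually_elim (use kin in auto)
  qed auto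
  then show ?thesis using meas_kl[of 0 b] by simp
qed

lemma gk_nn: "gk \<ge> 0" and gl_nn: "gl \<ge> 0" and gkl_pos: "gkl > 0"
proof -
  have *: "c i j * (1 - c i' j) * \<gamma> j \<ge> 0" if "i \<in> {1..n}" "i' \<in> {1..n}" "j \<in> {1..n+1}" for i i' j
    using c01[OF that(1,3)] c01[OF that(2,3)] gpos[OF that(3)] by auto
  show "gk \<ge> 0" unfolding gk_def gamma_single_def using * kin lin by (intro sum_nonneg) auto
  show "gl \<ge> 0" unfolding gl_def gamma_single_def using * kin lin by (intro sum_nonneg) auto
  show "gkl > 0" using gklpos by (simp add: gkl_def)
qed

definition d :: "real \<Rightarrow> real \<Rightarrow> real" where
  "d a y = (1 + a / \<sigma> k) powr (- gk) / \<sigma> l *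
     (gkl * (1 + a / \<sigma> k + y / \<sigma> l) powr (- gkl - 1) * (1 + y / \<sigma> l) powr (- gl)
      + gl * (1 + a / \<sigma> k + y / \<sigma> l) powr (- gkl) * (1 + y / \<sigma> l) powr (- gl - 1))"

lemma G_deriv: assumes "a \<ge> 0" "y \<ge> 0"
  shows "((\<lambda>y. - G a y) has_real_derivative d a y) (at y)"
proof -
  have p1: "1 + a / \<sigma> k > 0" "1 + y / \<sigma> l > 0" "1 + a / \<sigma> k + y / \<sigma> l > 0"
    using assms sk sl by (auto intro!: add_pos_nonneg divide_nonneg_pos)
  have hu: "((\<lambda>y. 1 + a / \<sigma> k + y / \<sigma> l) has_real_derivative 1 / \<sigma> l) (at y)"
    using sl by (auto intro!: derivative_eq_intros)
  have hv: "((\<lambda>y. 1 + y / \<sigma> l) has_real_derivative 1 / \<sigma> l) (at y)"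
    using sl by (auto intro!: derivative_eq_intros)
  have du: "((\<lambda>y. (1 + a / \<sigma> k + y / \<sigma> l) powr (- gkl)) has_real_derivative
      (- gkl) * (1 + a / \<sigma> k + y / \<sigma> l) powr (- gkl - 1) * (1 / \<sigma> l)) (at y)"
    using DERIV_fun_powr[OF hu p1(3), of "- gkl"] by simp
  have dv: "((\<lambda>y. (1 + y / \<sigma> l) powr (- gl)) has_real_derivative
      (- gl) * (1 + y / \<sigma> l) powr (- gl - 1) * (1 / \<sigma> l)) (at y)"
    using DERIV_fun_powr[OF hv p1(2), of "- gl"] by simp
  have D: "((\<lambda>y. - ((1 + a / \<sigma> k) powr (- gk) * ((1 + a / \<sigma> k + y / \<sigma> l) powr (- gkl) * (1 + y / \<sigma> l) powr (- gl))))
     has_real_derivative - ((1 + a / \<sigma> k) powr (- gk) *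
       ((- gkl) * (1 + a / \<sigma> k + y / \<sigma> l) powr (- gkl - 1) * (1 / \<sigma> l) * (1 + y / \<sigma> l) powr (- gl)
        + (- gl) * (1 + y / \<sigma> l) powr (- gl - 1) * (1 / \<sigma> l) * (1 + a / \<sigma> k + y / \<sigma> l) powr (- gkl)))) (at y)"
    by (rule DERIV_minus[OF DERIV_cmult[OF DERIV_mult[OF du dv]]])
  have e1: "(\<lambda>y. - G a y) = (\<lambda>y. - ((1 + a / \<sigma> k) powr (- gk) * ((1 + a / \<sigma> k + y / \<sigma> l) powr (- gkl) * (1 + y / \<sigma> l) powr (- gl))))"
    by (simp add: G_def fun_eq_iff mult.assoc)
  have e2: "- ((1 + a / \<sigma> k) powr (- gk) *
       ((- gkl) * (1 + a / \<sigma> k + y / \<sigma> l) powr (- gkl - 1) * (1 / \<sigma> l) * (1 + y / \<sigma> l) powr (- gl)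
        + (- gl) * (1 + y / \<sigma> l) powr (- gl - 1) * (1 / \<sigma> l) * (1 + a / \<sigma> k + y / \<sigma> l) powr (- gkl))) = d a y"
    unfolding d_def by (simp add: algebra_simps)
  show ?thesis using D unfolding e1 e2 .
qed

lemma d_nn: assumes "a \<ge> 0" "y \<ge> 0" shows "d a y \<ge> 0"
  unfolding d_def using gk_nn gl_nn gkl_pos sl
  by (intro mult_nonneg_nonneg add_nonneg_nonneg divide_nonneg_pos) auto

lemma d_meas[measurable]: "d a \<in> borel_measurable borel"
  unfolding d_def by measurable

lemma G_lim: assumes "a \<ge> 0" shows "((\<lambda>y. - G a y) \<longlongrightarrow> 0) at_top"
proof -
  have u: "filterlim (\<lambda>y. 1 + a / \<sigma> k + y / \<sigma> l) at_top at_top"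
  proof (rule filterlim_tendsto_add_at_top[OF tendsto_const])
    have "filterlim (\<lambda>y. inverse (\<sigma> l) * y) at_top at_top"
      using sl by (intro filterlim_tendsto_pos_mult_at_top[OF tendsto_const] filterlim_ident) auto
    then show "filterlim (\<lambda>y. y / \<sigma> l) at_top at_top" by (simp add: field_simps)
  qed
  have g: "((\<lambda>y. (1 + a / \<sigma> k) powr (- gk) * (1 + a / \<sigma> k + y / \<sigma> l) powr (- gkl)) \<longlongrightarrow> 0) at_top"
    using tendsto_mult[OF tendsto_const tendsto_neg_powr[OF _ u]] gkl_pos by auto
  have "((\<lambda>y. G a y) \<longlongrightarrow> 0) at_top"
  proof (rule Lim_null_comparison[OF _ g])
    show "\<forall>\<^sub>F y in at_top. norm (G a y) \<le> (1 + a / \<sigma> k) powr (- gk) * (1 + a / \<sigma> k + y / \<sigma> l) powr (- gkl)"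
      using eventually_ge_at_top[of 0]
    proof eventually_elim
      case (elim y)
      have v: "1 + y / \<sigma> l \<ge> 1" using elim sl by auto
      have "(1 + y / \<sigma> l) powr (- gl) \<le> 1"
        using ge_one_powr_ge_zero[OF v gl_nn] by (simp add: powr_minus inverse_le_1_iff)
      moreover have "(1 + y / \<sigma> l) powr (- gl) \<ge> 0" by simp
      ultimately show ?case unfolding G_def
        by (simp add: abs_mult mult_left_le)
    qed
  qed
  then show ?thesis using tendsto_minus by fastforce
qed

lemma dens_Ioi: assumes a: "a \<ge> 0"
  shows "emeasure (density lborel (\<lambda>y. ennreal (d a y) * indicator {0<..} y)) {b<..} = ennreal (G a (max b 0))"
proof -
  define b' where "b' = max b 0"
  have "(\<integral>\<^sup>+y. ennreal (d a y) * indicator {b'..} y \<partial>lborel) = ennreal (0 - (- G a b'))"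
    by (rule nn_integral_FTC_atLeast[OF d_meas G_deriv[OF a] d_nn[OF a] G_lim[OF a]])
       (auto simp: b'_def)
  also have "(\<integral>\<^sup>+y. ennreal (d a y) * indicator {b'..} y \<partial>lborel)
      = (\<integral>\<^sup>+y. indicator {b<..} y * (ennreal (d a y) * indicator {0<..} y) \<partial>lborel)"
    using AE_lborel_singleton[of b']
    by (intro nn_integral_cong_AE) (auto elim!: eventually_mono simp: b'_def split: split_indicator)
  also have "\<dots> = emeasure (density lborel (\<lambda>y. ennreal (d a y) * indicator {0<..} y)) {b<..}"
    by (subst emeasure_density) (auto simp: mult.commute nn_integral_set_ennreal)
  finally show ?thesis by (simp add: b'_def)
qed

definition phi :: "real \<Rightarrow> real \<Rightarrow> real" where
  "phi a y = (gkl / (gl + gkl) + gl / (gl + gkl) * (1 + a / (gkl * (\<sigma> k / gkl * (1 + y / \<sigma> l)))))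
     * (1 + a / \<sigma> k) powr (- gk) * (1 + a / (gkl * (\<sigma> k / gkl * (1 + y / \<sigma> l)))) powr (- gkl - 1)"

lemma glk: "gamma_pair n c \<gamma> l k = gkl"
  unfolding gkl_def gamma_pair_def by (simp add: mult.commute mult.left_commute)

lemma powr_p1: "(x::real) > 0 \<Longrightarrow> x powr (p + 1) = x * x powr p"
  by (simp add: powr_add)

lemma phi_eq: assumes a: "a \<ge> 0" and y: "y > 0"
  shows "d 0 y * phi a y = d a y"
proof -
  define v where "v = 1 + y / \<sigma> l"
  define u where "u = 1 + a / \<sigma> k + y / \<sigma> l"
  have v: "v > 0" unfolding v_def using y sl by (auto intro: add_pos_pos)
  have u: "u > 0" unfolding u_def using y sl a sk by (auto intro!: add_pos_nonneg add_nonneg_pos)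
  have m: "gkl * (\<sigma> k / gkl * (1 + y / \<sigma> l)) = \<sigma> k * v"
    using gkl_pos by (simp add: v_def)
  have uv: "u = v + a / \<sigma> k" by (simp add: u_def v_def)
  have t: "1 + a / (gkl * (\<sigma> k / gkl * (1 + y / \<sigma> l))) = u / v"
    unfolding m uv using v sk by (simp add: field_simps)
  define A0 where "A0 = (1 + a / \<sigma> k) powr (- gk)"
  define U1 where "U1 = u powr (- gkl - 1)"
  define V0 where "V0 = v powr (- gl - 1)"
  define W where "W = v powr gkl"
  have W: "W > 0" unfolding W_def using v by simp
  have e1: "u powr (- gkl) = u * U1" unfolding U1_def using powr_p1[OF u, of "- gkl - 1"] by simp
  have e2: "v powr (- gl) = v * V0" unfolding V0_def using powr_p1[OF v, of "- gl - 1"] by simp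
  have e3: "v powr (- gkl) = 1 / W" unfolding W_def by (simp add: powr_minus divide_inverse)
  have e4: "v powr (- gkl - 1) = 1 / (W * v)"
    using powr_p1[OF v, of "- gkl - 1"] e3 v W by (simp add: field_simps)
  have e5: "(u / v) powr (- gkl - 1) = U1 * (W * v)"
    unfolding U1_def using u v e4 by (simp add: powr_divide field_simps)
  have d0: "d 0 y = 1 / \<sigma> l * (gkl * (1 / (W * v)) * (v * V0) + gl * (1 / W) * V0)"
    using e2 e3 e4 by (simp add: d_def flip: v_def V0_def)
  have da: "d a y = A0 / \<sigma> l * (gkl * U1 * (v * V0) + gl * (u * U1) * V0)"
    unfolding d_def v_def[symmetric] u_def[symmetric] A0_def[symmetric] using e1 e2 U1_def V0_def by simp
  have ph: "phi a y = (gkl / (gl + gkl) + gl / (gl + gkl) * (u / v)) * A0 * (U1 * (W * v))"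
    unfolding phi_def t A0_def[symmetric] e5 by simp
  have gs: "gl + gkl > 0" using gl_nn gkl_pos by simp
  have d0': "d 0 y = (gl + gkl) / (\<sigma> l * W) * V0"
    unfolding d0 using W v sl by (simp add: field_simps)
  have ph': "phi a y = (gkl * v + gl * u) / (gl + gkl) * A0 * U1 * W"
  proof -
    have e: "(gkl / (gl + gkl) + gl / (gl + gkl) * (u / v)) * v = (gkl * v + gl * u) / (gl + gkl)"
      using v gs by (simp add: add_divide_distrib[symmetric] divide_simps)
    have "phi a y = ((gkl / (gl + gkl) + gl / (gl + gkl) * (u / v)) * v) * (A0 * U1 * W)"
      unfolding ph by (simp only: mult_ac)
    then show ?thesis unfolding e by (simp only: mult_ac)
  qed
  have "W * \<sigma> l * (gkl + gl) > 0" using W sl gs by simp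
  then have nz: "W * (\<sigma> l * gkl) + W * (\<sigma> l * gl) > 0" by (simp add: algebra_simps)
  show ?thesis unfolding d0' da ph' using W v sl gs nz by (simp add: field_simps)
qed

definition dens :: "real \<Rightarrow> real \<Rightarrow> real" where
  "dens a y = d a y * indicator {0<..} y"

lemma dens_meas[measurable]: "dens a \<in> borel_measurable borel"
  unfolding dens_def by measurable

lemma dens_nn: "a \<ge> 0 \<Longrightarrow> dens a y \<ge> 0"
  unfolding dens_def using d_nn by (auto split: split_indicator)

lemma dens_Ioi': "a \<ge> 0 \<Longrightarrow> emeasure (density lborel (\<lambda>y. ennreal (dens a y))) {b<..} = ennreal (G a (max b 0))"
proof -
  have "(\<lambda>y. ennreal (dens a y)) = (\<lambda>y. ennreal (d a y) * indicator {0<..} y)"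
    by (auto simp: dens_def split: split_indicator)
  then show "a \<ge> 0 \<Longrightarrow> ?thesis" using dens_Ioi by simp
qed

lemma measure_eq_Ioi:
  fixes \<mu> \<nu> :: "real measure"
  assumes "sets \<mu> = sets borel" "sets \<nu> = sets borel"
    and "\<And>b. emeasure \<mu> {b<..} = emeasure \<nu> {b<..}"
    and "\<And>b. emeasure \<mu> {b<..} \<noteq> \<infinity>"
  shows "\<mu> = \<nu>"
proof (rule measure_eqI_generator_eq[where \<Omega>=UNIV and E="range greaterThan" and A="\<lambda>i. {- real i<..}"])
  show "Int_stable (range greaterThan :: real set set)"
  proof -
    have "{x<..} \<inter> {y<..} = {max x y<..}" for x y :: real by auto
    then show ?thesis unfolding Int_stable_def by auto
  qed
  have "sets (borel::real measure) = sigma_sets UNIV (range greaterThan)"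
    by (subst borel_Ioi) simp
  then show "sets \<mu> = sigma_sets UNIV (range greaterThan)" "sets \<nu> = sigma_sets UNIV (range greaterThan)"
    using assms by auto
  show "(\<Union>i. {- real i<..}) = (UNIV :: real set)"
  proof -
    have "\<exists>i. - real i < x" for x :: real
      using reals_Archimedean2[of "- x"] by (metis minus_less_iff)
    then show ?thesis by auto
  qed
qed (use assms in auto)

definition Sk :: "real \<Rightarrow> 'a set" where
  "Sk a = {\<omega> \<in> space M. X \<omega> k > a}"

lemma Sk_sets[measurable]: "Sk a \<in> sets M" unfolding Sk_def by measurable

lemma distr_Y: "distr M borel (\<lambda>\<omega>. X \<omega> l) = density lborel (\<lambda>y. ennreal (dens 0 y))"
proof (rule measure_eq_Ioi)
  fix b
  have "emeasure (distr M borel (\<lambda>\<omega>. X \<omega> l)) {b<..} = emeasure M {\<omega>\<in>space M. X \<omega> l > b}"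
    by (subst emeasure_distr) (auto intro!: arg_cong[where f="emeasure M"])
  also have "\<dots> = ennreal (G 0 (max b 0))" using meas_l[of b] by (simp add: emeasure_eq_measure)
  finally show "emeasure (distr M borel (\<lambda>\<omega>. X \<omega> l)) {b<..} = emeasure (density lborel (\<lambda>y. ennreal (dens 0 y))) {b<..}"
    using dens_Ioi'[of 0 b] by simp
  then show "emeasure (distr M borel (\<lambda>\<omega>. X \<omega> l)) {b<..} \<noteq> \<infinity>"
    using dens_Ioi'[of 0 b] by simp
qed auto

lemma distr_SY: assumes a: "a \<ge> 0"
  shows "distr (density M (indicator (Sk a))) borel (\<lambda>\<omega>. X \<omega> l) = density lborel (\<lambda>y. ennreal (dens a y))"
proof (rule measure_eq_Ioi)
  fix b
  have "emeasure (distr (density M (indicator (Sk a))) borel (\<lambda>\<omega>. X \<omega> l)) {b<..}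
      = emeasure (density M (indicator (Sk a))) ((\<lambda>\<omega>. X \<omega> l) -` {b<..} \<inter> space M)"
    by (subst emeasure_distr) auto
  also have "\<dots> = emeasure M (Sk a \<inter> ((\<lambda>\<omega>. X \<omega> l) -` {b<..} \<inter> space M))"
    by (rule emeasure_restricted) measurable
  also have "\<dots> = emeasure M {\<omega>\<in>space M. X \<omega> k > a \<and> X \<omega> l > b}"
    by (auto simp: Sk_def intro!: arg_cong[where f="emeasure M"])
  also have "\<dots> = ennreal (G a (max b 0))" using meas_kl[OF a, of b] by (simp add: emeasure_eq_measure)
  finally show "emeasure (distr (density M (indicator (Sk a))) borel (\<lambda>\<omega>. X \<omega> l)) {b<..} = emeasure (density lborel (\<lambda>y. ennreal (dens a y))) {b<..}"
    using dens_Ioi'[OF a, of b] by simp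
  then show "emeasure (distr (density M (indicator (Sk a))) borel (\<lambda>\<omega>. X \<omega> l)) {b<..} \<noteq> \<infinity>"
    using dens_Ioi'[OF a, of b] by simp
qed auto

lemma powr_neg_le1: "(x::real) \<ge> 1 \<Longrightarrow> p \<ge> 0 \<Longrightarrow> x powr (- p) \<le> 1"
  using ge_one_powr_ge_zero[of x p] by (simp add: powr_minus inverse_le_1_iff)

lemma phi_bound: assumes a: "a \<ge> 0" and y: "y > 0" shows "\<bar>phi a y\<bar> \<le> 1"
proof -
  define v where "v = 1 + y / \<sigma> l"
  have v: "v > 0" unfolding v_def using y sl by (auto intro: add_pos_pos)
  define t where "t = 1 + a / (gkl * (\<sigma> k / gkl * (1 + y / \<sigma> l)))"
  have m: "gkl * (\<sigma> k / gkl * (1 + y / \<sigma> l)) = \<sigma> k * v"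
    using gkl_pos by (simp add: v_def)
  have t1: "t \<ge> 1" unfolding t_def m using a sk v by simp
  define q where "q = t powr (- gkl - 1)"
  have q0: "q \<ge> 0" "q \<le> 1" unfolding q_def using powr_neg_le1[OF t1, of "gkl + 1"] gkl_pos by auto
  have tq: "t * q \<le> 1" unfolding q_def using powr_p1[of t "- gkl - 1"] t1 powr_neg_le1[OF t1, of gkl] gkl_pos by simp
  have tq0: "t * q \<ge> 0" using t1 q0 by simp
  define A0 where "A0 = (1 + a / \<sigma> k) powr (- gk)"
  have A0: "A0 \<ge> 0" "A0 \<le> 1" unfolding A0_def using powr_neg_le1[of "1 + a / \<sigma> k" gk] a sk gk_nn by auto
  have gs: "gl + gkl > 0" using gl_nn gkl_pos by simp
  have ph: "phi a y = A0 * (gkl / (gl + gkl) * q + gl / (gl + gkl) * (t * q))"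
    unfolding phi_def t_def[symmetric] q_def[symmetric] A0_def[symmetric] by (simp add: algebra_simps)
  have i0: "0 \<le> gkl / (gl + gkl) * q + gl / (gl + gkl) * (t * q)"
    using q0 tq0 gs gl_nn gkl_pos by simp
  have "gkl / (gl + gkl) * q + gl / (gl + gkl) * (t * q) \<le> gkl / (gl + gkl) * 1 + gl / (gl + gkl) * 1"
    using q0 tq gs gl_nn gkl_pos by (intro add_mono mult_left_mono) auto
  also have "\<dots> = (gkl + gl) / (gl + gkl)" by (simp add: add_divide_distrib)
  also have "\<dots> = 1" using gs by (simp add: add.commute)
  finally have i1: "gkl / (gl + gkl) * q + gl / (gl + gkl) * (t * q) \<le> 1" .
  have "0 \<le> phi a y" "phi a y \<le> 1" unfolding ph using A0 i0 i1 by (auto intro: mult_le_one)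
  then show ?thesis by simp
qed

definition phi' :: "real \<Rightarrow> real \<Rightarrow> real" where
  "phi' a y = (if y > 0 then phi a y else 0)"

lemma phi'_meas[measurable]: "phi' a \<in> borel_measurable borel"
  unfolding phi'_def phi_def by measurable

lemma dens_phi': assumes "a \<ge> 0" shows "dens 0 y * phi' a y = dens a y"
  using phi_eq[OF assms] by (auto simp: dens_def phi'_def)

abbreviation F where "F \<equiv> vimage_algebra (space M) (\<lambda>\<omega>. X \<omega> l) borel"

lemma sfs: "sigma_finite_subalgebra M F"
proof (rule finite_measure_subalgebra_is_sigma_finite)
  show "finite_measure_subalgebra M F"
    unfolding finite_measure_subalgebra_def finite_measure_subalgebra_axioms_def subalgebra_def
  proof (intro conjI)
    show "finite_measure M" by unfold_locales
    show "space F = space M" by simp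
    show "sets F \<subseteq> sets M"
      by (subst sets_vimage_algebra2) auto
  qed
qed

lemma main: assumes a: "a \<ge> 0"
  shows "AE \<omega> in M. real_cond_exp M F (indicator {\<omega> \<in> space M. X \<omega> k > a}) \<omega> = phi a (X \<omega> l)"
proof -
  interpret sigma_finite_subalgebra M F by (rule sfs)
  define g where "g \<omega> = phi' a (X \<omega> l)" for \<omega>
  have gF: "g \<in> borel_measurable F"
    unfolding g_def
    by (rule measurable_compose[OF measurable_vimage_algebra1 phi'_meas]) auto
  have gM[measurable]: "g \<in> borel_measurable M" unfolding g_def by measurable
  have ig: "integrable M g"
  proof (rule integrable_const_bound[where B=1])
    show "AE x in M. norm (g x) \<le> 1"
      using AE_Xl by eventually_elim (use phi_bound[OF a] in \<open>auto simp: g_def phi'_def\<close>)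
  qed simp
  have f: "indicator {\<omega> \<in> space M. X \<omega> k > a} = (indicator (Sk a) :: 'a \<Rightarrow> real)"
    by (simp add: Sk_def)
  have iF: "integrable M (indicator (Sk a) :: 'a \<Rightarrow> real)"
    by (rule integrable_real_indicator) (auto simp: less_top[symmetric])
  define \<nu> where "\<nu> b = density lborel (\<lambda>y. ennreal (dens b y))" for b
  have fin: "emeasure (\<nu> a) B \<noteq> \<infinity>" for B
  proof -
    have "emeasure (\<nu> a) B \<le> emeasure (\<nu> a) (space (\<nu> a))" by (rule emeasure_space)
    also have "\<dots> = emeasure (distr (density M (indicator (Sk a))) borel (\<lambda>\<omega>. X \<omega> l)) UNIV"
      unfolding \<nu>_def distr_SY[OF a, symmetric] by simp
    also have "\<dots> = emeasure M (Sk a \<inter> ((\<lambda>\<omega>. X \<omega> l) -` UNIV \<inter> space M))"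
      by (subst emeasure_distr) (auto simp: emeasure_restricted)
    also have "\<dots> < \<infinity>" by (simp add: less_top[symmetric])
    finally show ?thesis by simp
  qed
  have AEeq: "AE \<omega> in M. real_cond_exp M F (indicator (Sk a)) \<omega> = g \<omega>"
  proof (rule real_cond_exp_charact)
    fix A assume A: "A \<in> sets F"
    then obtain B where B: "B \<in> sets borel" and AB: "A = (\<lambda>\<omega>. X \<omega> l) -` B \<inter> space M"
      by (subst (asm) sets_vimage_algebra2) auto
    have "(\<integral>\<omega>\<in>A. indicator (Sk a) \<omega> \<partial>M) = (\<integral>\<omega>. indicator (Sk a \<inter> A) \<omega> \<partial>M)"
      unfolding set_lebesgue_integral_def by (intro Bochner_Integration.integral_cong) (auto split: split_indicator)
    also have "\<dots> = measure M (Sk a \<inter> ((\<lambda>\<omega>. X \<omega> l) -` B \<inter> space M))"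
      unfolding AB by (simp add: Int_absorb2 Sk_def Int_assoc)
    also have "\<dots> = measure (distr (density M (indicator (Sk a))) borel (\<lambda>\<omega>. X \<omega> l)) B"
      unfolding measure_def using B by (subst emeasure_distr) (auto simp: emeasure_restricted)
    also have "\<dots> = measure (\<nu> a) B" unfolding distr_SY[OF a] \<nu>_def ..
    also have "\<dots> = (\<integral>y. indicator B y \<partial>\<nu> a)"
      using B fin by (simp add: \<nu>_def)
    also have "\<dots> = (\<integral>y. dens a y * indicator B y \<partial>lborel)"
      unfolding \<nu>_def using dens_nn[OF a] B by (subst integral_density) auto
    also have "\<dots> = (\<integral>y. dens 0 y * (indicator B y * phi' a y) \<partial>lborel)"
      using dens_phi'[OF a] by (intro Bochner_Integration.integral_cong) (auto simp: mult_ac)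
    also have "\<dots> = (\<integral>y. indicator B y * phi' a y \<partial>\<nu> 0)"
      unfolding \<nu>_def using dens_nn[of 0] using B by (subst integral_density) auto
    also have "\<dots> = (\<integral>y. indicator B y * phi' a y \<partial>distr M borel (\<lambda>\<omega>. X \<omega> l))"
      unfolding \<nu>_def distr_Y ..
    also have "\<dots> = (\<integral>\<omega>. indicator B (X \<omega> l) * phi' a (X \<omega> l) \<partial>M)"
      using B by (subst integral_distr) auto
    also have "\<dots> = (\<integral>\<omega>\<in>A. g \<omega> \<partial>M)"
      unfolding set_lebesgue_integral_def AB g_def
      by (intro Bochner_Integration.integral_cong) (auto split: split_indicator)
    finally show "(\<integral>\<omega>\<in>A. indicator (Sk a) \<omega> \<partial>M) = (\<integral>\<omega>\<in>A. g \<omega> \<partial>M)" .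
  qed (use iF ig gF in auto)
  show ?thesis
    using AEeq AE_Xl unfolding f by eventually_elim (auto simp: g_def phi'_def)
qed

end

theorem theorem3p2:
  fixes M :: "'a measure" and X :: "'a \<Rightarrow> nat \<Rightarrow> real"
    and n :: nat and c :: "nat \<Rightarrow> nat \<Rightarrow> real"
    and \<sigma> :: "nat \<Rightarrow> real" and \<gamma> :: "nat \<Rightarrow> real" and k l :: nat
  assumes "prob_space M"
    and "n \<ge> 2"
    and "\<And>i j. i \<in> {1..n} \<Longrightarrow> j \<in> {1..n+1} \<Longrightarrow> c i j \<in> {0, 1}"
    and "\<And>i. i \<in> {1..n} \<Longrightarrow> \<sigma> i > 0"
    and "\<And>j. j \<in> {1..n+1} \<Longrightarrow> \<gamma> j > 0"
    and "\<And>i. i \<in> {1..n} \<Longrightarrow> (\<lambda>\<omega>. X \<omega> i) \<in> borel_measurable M"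
    and "\<And>x. (\<forall>i\<in>{1..n}. x i > 0) \<Longrightarrow>
           measure M {\<omega> \<in> space M. \<forall>i\<in>{1..n}. X \<omega> i > x i}
           = (\<Prod>j=1..n+1. (1 + (\<Sum>i=1..n. c i j / \<sigma> i * x i)) powr (- \<gamma> j))"
    and "k \<in> {1..n}" and "l \<in> {1..n}" and "k \<noteq> l"
    and "gamma_pair n c \<gamma> k l > 0"
  shows "\<forall>xk > 0. AE \<omega> in M.
     real_cond_exp M (vimage_algebra (space M) (\<lambda>\<omega>. X \<omega> l) borel)
        (indicator {\<omega> \<in> space M. X \<omega> k > xk}) \<omega>
     = (let gkl = gamma_pair n c \<gamma> k l;
            glk = gamma_pair n c \<gamma> l k;
            gk = gamma_single n c \<gamma> k l;
            gl = gamma_single n c \<gamma> l k;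
            gls = gl + gkl;
            xl = X \<omega> l;
            m = \<sigma> k / gkl * (1 + xl / \<sigma> l)
        in (gkl / gls + gl / gls * (1 + xk / (gkl * m)))
           * (1 + xk / \<sigma> k) powr (- gk)
           * (1 + xk / (gkl * m)) powr (- glk - 1))"
proof -
  have "pareto M X n c \<sigma> \<gamma> k l"
    unfolding pareto_def pareto_axioms_def using assms by blast
  then interpret P: pareto M X n c \<sigma> \<gamma> k l .
  show ?thesis
  proof (intro allI impI)
    fix xk :: real assume xk: "xk > 0"
    from P.main[of xk] xk show "AE \<omega> in M.
     real_cond_exp M (vimage_algebra (space M) (\<lambda>\<omega>. X \<omega> l) borel)
        (indicator {\<omega> \<in> space M. X \<omega> k > xk}) \<omega>
     = (let gkl = gamma_pair n c \<gamma> k l;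
            glk = gamma_pair n c \<gamma> l k;
            gk = gamma_single n c \<gamma> k l;
            gl = gamma_single n c \<gamma> l k;
            gls = gl + gkl;
            xl = X \<omega> l;
            m = \<sigma> k / gkl * (1 + xl / \<sigma> l)
        in (gkl / gls + gl / gls * (1 + xk / (gkl * m)))
           * (1 + xk / \<sigma> k) powr (- gk)
           * (1 + xk / (gkl * m)) powr (- glk - 1))"
      by (simp add: P.phi_def P.gkl_def P.gk_def P.gl_def P.glk[unfolded P.gkl_def] Let_def)
  qed
qed

end
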